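(* In the setting of the context, consider a Case 3 spacetime ($\partial_v r_-<0$). If there exist constants $\alpha\in(0,1)$ and $\varepsilon>0$ such that $$\alpha\frac{dx_+}{dv}+(1-\alpha)\frac{dx_-}{dv}>-\frac{h_c}{2}\alpha(1-\alpha)(1-\varepsilon)(x_+-x_-)^2$$ holds for all $v>v_0$ with $v_0$ sufficiently large, then the spacetime is of Class 2, i.e. some radially outgoing null geodesics emitted from the inner AH never reach the outer AH.
   Context: Spherically symmetric spacetime $ds^2=-f(v,r)A(v,r)^2dv^2+2A(v,r)\,dr\,dv+r^2d\Omega^2$ with $A>0$, $f,A\to1$ as $r\to\infty$, $f(v,0)=1$, $\partial_rf(v,0)=\partial_rA(v,0)=0$; $f(v,\cdot)$ has exactly two zeros $r_+(v)>r_-(v)$ (outer/inner apparent horizons, AHs), $f=F(r-r_+)(r-r_-)$ with $F>0$, and $h=AF>0$. Assumptions: $\partial_v r_+<0$; $r_\pm(v)\to r_c$ as $v\to\infty$; the sign of $\partial_v r_-$ is constant; the $v\to\infty$ limits of $A,F,h$ behave as analytic functions of $r$, so all $\partial_r^n h$ converge as $v\to\infty$; $h_c=\lim_{v\to\infty}h(v,r_c)$. With $x=r-r_c$, $x_\pm=r_\pm-r_c$ and $h$ regarded as a function of $(v,x)$, radially outgoing null geodesics solve $dx/dv=\tfrac12h(v,x)(x-x_+(v))(x-x_-(v))$. Case 3 means $\partial_v r_-<0$. In Case 3, Class 1 means all outgoing null geodesics emitted from the inner AH reach the outer AH; Class 2 means some of them do not. *)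

theory Defs
  imports "HOL-Analysis.Analysis"
begin

text \<open>Coordinates: advanced time v and areal radius r.
  With x = r - r_c one has dx/dv = dr/dv, so the outgoing null geodesic equation
  dx/dv = h (x - x_+)(x - x_-) / 2 is written here in the r coordinate.\<close>

definition metric_f :: "(real \<Rightarrow> real \<Rightarrow> real) \<Rightarrow> (real \<Rightarrow> real) \<Rightarrow> (real \<Rightarrow> real) \<Rightarrow> real \<Rightarrow> real \<Rightarrow> real"
  where "metric_f F rp rm v r = F v r * (r - rp v) * (r - rm v)"

definition metric_h :: "(real \<Rightarrow> real \<Rightarrow> real) \<Rightarrow> (real \<Rightarrow> real \<Rightarrow> real) \<Rightarrow> real \<Rightarrow> real \<Rightarrow> real"
  where "metric_h A F v r = A v r * F v r"

definition outgoing_null_geodesic ::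
  "(real \<Rightarrow> real \<Rightarrow> real) \<Rightarrow> (real \<Rightarrow> real) \<Rightarrow> (real \<Rightarrow> real) \<Rightarrow> real \<Rightarrow> (real \<Rightarrow> real) \<Rightarrow> bool"
  where "outgoing_null_geodesic h rp rm v1 r \<longleftrightarrow>
    (\<forall>v\<ge>v1. r v > 0 \<and>
       (r has_real_derivative (h v (r v) * (r v - rp v) * (r v - rm v) / 2)) (at v within {v1..}))"

definition emitted_from_inner_AH :: "(real \<Rightarrow> real) \<Rightarrow> real \<Rightarrow> (real \<Rightarrow> real) \<Rightarrow> bool"
  where "emitted_from_inner_AH rm v1 r \<longleftrightarrow> r v1 = rm v1"

definition reaches_outer_AH :: "(real \<Rightarrow> real) \<Rightarrow> real \<Rightarrow> (real \<Rightarrow> real) \<Rightarrow> bool"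
  where "reaches_outer_AH rp v1 r \<longleftrightarrow> (\<exists>v\<ge>v1. r v = rp v)"

definition class2 :: "(real \<Rightarrow> real \<Rightarrow> real) \<Rightarrow> (real \<Rightarrow> real) \<Rightarrow> (real \<Rightarrow> real) \<Rightarrow> bool"
  where "class2 h rp rm \<longleftrightarrow>
    (\<exists>v1 r. outgoing_null_geodesic h rp rm v1 r \<and> emitted_from_inner_AH rm v1 r
            \<and> \<not> reaches_outer_AH rp v1 r)"

end

theory Submission
  imports Defs
begin


primrec pit :: "(real \<Rightarrow> real \<Rightarrow> real) \<Rightarrow> real \<Rightarrow> real \<Rightarrow> nat \<Rightarrow> real \<Rightarrow> real" where
  "pit g t0 y0 0 = (\<lambda>t. y0)"
| "pit g t0 y0 (Suc n) = (\<lambda>t. y0 + integral {t0..t} (\<lambda>s. g s (pit g t0 y0 n s)))"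

lemma comp_cont:
  assumes gc: "continuous_on ({t0..} \<times> UNIV) (\<lambda>p. g (fst p) (snd p))"
    and uc: "continuous_on {t0..T} u"
  shows "continuous_on {t0..T} (\<lambda>s. g s (u s))"
proof -
  have "continuous_on {t0..T} (\<lambda>s. (s, u s))" by (intro continuous_intros uc)
  moreover have "(\<lambda>s. (s, u s)) ` {t0..T} \<subseteq> {t0..} \<times> UNIV" by auto
  ultimately show ?thesis using continuous_on_compose2[OF gc] by fastforce
qed

lemma indef_int_cont:
  assumes "continuous_on {a..b} (f::real\<Rightarrow>real)"
  shows "continuous_on {a..b} (\<lambda>t. c + integral {a..t} f)"
proof -
  have "\<forall>t\<in>{a..b}. continuous (at t within {a..b}) (\<lambda>t. c + integral {a..t} f)"
  proof
    fix t assume t: "t \<in> {a..b}"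
    have "((\<lambda>t. c + integral {a..t} f) has_real_derivative (0 + f t)) (at t within {a..b})"
      by (intro derivative_intros integral_has_real_derivative assms t)
    then show "continuous (at t within {a..b}) (\<lambda>t. c + integral {a..t} f)"
      using DERIV_continuous by blast
  qed
  then show ?thesis using continuous_on_eq_continuous_within by blast
qed

lemma pit_cont:
  assumes gc: "continuous_on ({t0..} \<times> UNIV) (\<lambda>p. g (fst p) (snd p))"
  shows "continuous_on {t0..T} (pit g t0 y0 n)"
proof (induction n)
  case 0 then show ?case by simp
next
  case (Suc n)
  then show ?case using indef_int_cont[OF comp_cont[OF gc Suc]] by simp
qed

lemma integral_pow_shift:
  assumes "a \<le> (b::real)"
  shows "integral {a..b} (\<lambda>s. c * (s - a)^n) = c * (b - a)^(Suc n) / (Suc n)"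
proof -
  have d: "\<And>x. x\<in>{a..b} \<Longrightarrow> ((\<lambda>s. c * (s - a) ^ Suc n / real (Suc n)) has_vector_derivative c * (x - a) ^ n)
          (at x within {a..b})"
  proof -
    fix x
    have "((\<lambda>s. c * (s - a) ^ Suc n / real (Suc n)) has_real_derivative c * (x - a) ^ n) (at x within {a..b})"
      by (auto intro!: derivative_eq_intros simp del: power_Suc)
    then show "((\<lambda>s. c * (s - a) ^ Suc n / real (Suc n)) has_vector_derivative c * (x - a) ^ n)
        (at x within {a..b})" by (simp add: has_real_derivative_iff_has_vector_derivative)
  qed
  from integral_unique[OF fundamental_theorem_of_calculus[OF assms d]] show ?thesis by simp
qed

lemma pit_est:
  assumes gc: "continuous_on ({t0..} \<times> UNIV) (\<lambda>p. g (fst p) (snd p))"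
    and gb: "\<forall>s\<in>{t0..T}. \<forall>y z. \<bar>g s y\<bar> \<le> M \<and> \<bar>g s y - g s z\<bar> \<le> L * \<bar>y - z\<bar>"
  shows "t \<in> {t0..T} \<Longrightarrow> \<bar>pit g t0 y0 (Suc n) t - pit g t0 y0 n t\<bar> \<le> M * L^n * (t - t0)^(Suc n) / fact (Suc n)"
proof (induction n arbitrary: t)
  case 0
  have c: "continuous_on {t0..t} (\<lambda>s. g s y0)"
    using comp_cont[OF gc, of t "\<lambda>s. y0"] by simp
  have "\<bar>integral {t0..t} (\<lambda>s. g s y0)\<bar> \<le> integral {t0..t} (\<lambda>s. M)"
    using integral_norm_bound_integral[of "\<lambda>s. g s y0" "{t0..t}" "\<lambda>s. M"]
      integrable_continuous_real[OF c] gb 0 by auto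
  then show ?case using 0 by (simp add: mult.commute)
next
  case (Suc n)
  let ?p = "pit g t0 y0"
  have c1: "continuous_on {t0..t} (\<lambda>s. g s (?p (Suc n) s))"
    by (rule comp_cont[OF gc pit_cont[OF gc]])
  have c0: "continuous_on {t0..t} (\<lambda>s. g s (?p n s))"
    by (rule comp_cont[OF gc pit_cont[OF gc]])
  have cb: "continuous_on {t0..t} (\<lambda>s. (L * M * L^n / fact (Suc n)) * (s - t0)^(Suc n))"
    by (intro continuous_intros)
  have "?p (Suc (Suc n)) t - ?p (Suc n) t
      = integral {t0..t} (\<lambda>s. g s (?p (Suc n) s) - g s (?p n s))"
    using integral_diff[OF integrable_continuous_real[OF c1] integrable_continuous_real[OF c0]] by simp
  also have "\<bar>\<dots>\<bar> \<le> integral {t0..t} (\<lambda>s. (L * M * L^n / fact (Suc n)) * (s - t0)^(Suc n))"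
  proof (rule integral_norm_bound_integral[where 'a=real, unfolded real_norm_def])
    show "(\<lambda>s. g s (?p (Suc n) s) - g s (?p n s)) integrable_on {t0..t}"
      by (intro integrable_continuous_real continuous_intros c0 c1)
    show "(\<lambda>s. (L * M * L^n / fact (Suc n)) * (s - t0)^(Suc n)) integrable_on {t0..t}"
      by (rule integrable_continuous_real[OF cb])
    fix s assume s: "s \<in> {t0..t}"
    then have sT: "s \<in> {t0..T}" using Suc.prems by auto
    have "\<bar>g s (?p (Suc n) s) - g s (?p n s)\<bar> \<le> L * \<bar>?p (Suc n) s - ?p n s\<bar>"
      using gb sT by blast
    also have "\<dots> \<le> L * (M * L^n * (s - t0)^(Suc n) / fact (Suc n))"
    proof (rule mult_left_mono)
      show "\<bar>?p (Suc n) s - ?p n s\<bar> \<le> M * L^n * (s - t0)^(Suc n) / fact (Suc n)"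
        using Suc.IH[OF sT] .
      have "\<bar>g s 1 - g s 0\<bar> \<le> L * \<bar>1 - 0\<bar>" using gb sT by blast
      then show "0 \<le> L" by simp
    qed
    finally show "\<bar>g s (?p (Suc n) s) - g s (?p n s)\<bar> \<le> (L * M * L^n / fact (Suc n)) * (s - t0)^(Suc n)"
      by simp
  qed
  also have "\<dots> = (L * M * L^n / fact (Suc n)) * (t - t0)^(Suc (Suc n)) / (Suc (Suc n))"
    using integral_pow_shift[of t0 t "L * M * L^n / fact (Suc n)" "Suc n"] Suc.prems by (simp del: power_Suc)
  also have "\<dots> = M * L^(Suc n) * (t - t0)^(Suc (Suc n)) / fact (Suc (Suc n))"
    by (simp add: field_simps)
  finally show ?case .
qed

lemma picard_exists:
  fixes g :: "real \<Rightarrow> real \<Rightarrow> real"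
  assumes gc: "continuous_on ({t0..} \<times> UNIV) (\<lambda>p. g (fst p) (snd p))"
    and gb: "\<And>T. \<exists>M L. \<forall>s\<in>{t0..T}. \<forall>y z. \<bar>g s y\<bar> \<le> M \<and> \<bar>g s y - g s z\<bar> \<le> L * \<bar>y - z\<bar>"
  shows "\<exists>x. x t0 = y0 \<and> (\<forall>t\<ge>t0. (x has_real_derivative g t (x t)) (at t within {t0..}))"
proof -
  let ?p = "pit g t0 y0"
  define d where "d i t = ?p (Suc i) t - ?p i t" for i t
  define x where "x t = y0 + (\<Sum>i. d i t)" for t
  have psum: "?p n t = y0 + (\<Sum>i<n. d i t)" for n t
    unfolding d_def using sum_lessThan_telescope[of "\<lambda>i. ?p i t" n] by simp
  have ul: "uniform_limit {t0..T} ?p x sequentially" if "t0 \<le> T" for T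
  proof -
    obtain M L where HML: "\<forall>s\<in>{t0..T}. \<forall>y z. \<bar>g s y\<bar> \<le> M \<and> \<bar>g s y - g s z\<bar> \<le> L * \<bar>y - z\<bar>"
      using gb by blast
    have "\<bar>g t0 1 - g t0 0\<bar> \<le> L * \<bar>1 - 0\<bar>" "\<bar>g t0 1\<bar> \<le> M" using HML[rule_format, of t0 1 0] that by auto
    then have L0: "0 \<le> L" and M0: "0 \<le> M" by auto
    define c where "c n = M * L^n * (T - t0)^(Suc n) / fact (Suc n)" for n
    have bnd: "norm (d n t) \<le> c n" if t: "t \<in> {t0..T}" for n t
    proof -
      have "\<bar>d n t\<bar> \<le> M * L^n * (t - t0)^(Suc n) / fact (Suc n)"
        unfolding d_def using pit_est[OF gc HML t] .
      also have "\<dots> \<le> c n" unfolding c_def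
        using t L0 M0 by (intro divide_right_mono mult_left_mono power_mono) auto
      finally show ?thesis by simp
    qed
    have sc: "summable c"
    proof (rule summable_comparison_test')
      show "summable (\<lambda>n. M * (T - t0) * (inverse (fact n) * (L * (T - t0))^n))"
        by (intro summable_mult summable_exp)
      fix n :: nat
      have A0: "0 \<le> M * L^n * (T - t0)^(Suc n)" using L0 M0 that by simp
      have "fact n \<le> (fact (Suc n) :: real)" by (rule fact_mono) simp
      then have "M * L^n * (T - t0)^(Suc n) / fact (Suc n) \<le> M * L^n * (T - t0)^(Suc n) / fact n"
        using A0 by (intro divide_left_mono) auto
      also have "\<dots> = M * (T - t0) * (inverse (fact n) * (L * (T - t0))^n)"
        by (simp add: power_mult_distrib divide_simps)
      finally show "norm (c n) \<le> M * (T - t0) * (inverse (fact n) * (L * (T - t0))^n)"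
        using A0 unfolding c_def by simp
    qed
    have W: "uniform_limit {t0..T} (\<lambda>n t. \<Sum>i<n. d i t) (\<lambda>t. \<Sum>i. d i t) sequentially"
      by (rule Weierstrass_m_test[OF bnd sc])
    show ?thesis
    proof (rule uniform_limitI)
      fix e :: real assume e: "0 < e"
      show "\<forall>\<^sub>F n in sequentially. \<forall>t\<in>{t0..T}. dist (?p n t) (x t) < e"
        using uniform_limitD[OF W e] by eventually_elim (simp add: psum x_def dist_real_def)
    qed
  qed
  have xcont: "continuous_on {t0..T} x" if "t0 \<le> T" for T
    by (rule uniform_limit_theorem[OF always_eventually ul[OF that]]) (auto intro: pit_cont[OF gc])
  have inteq: "x t = y0 + integral {t0..t} (\<lambda>s. g s (x s))" if t: "t0 \<le> t" for t
  proof -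
    have U: "uniform_limit {t0..t} ?p x sequentially" using ul[OF t] .
    obtain M L where HML: "\<forall>s\<in>{t0..t}. \<forall>y z. \<bar>g s y\<bar> \<le> M \<and> \<bar>g s y - g s z\<bar> \<le> L * \<bar>y - z\<bar>"
      using gb by blast
    have "\<bar>g t0 1 - g t0 0\<bar> \<le> L * \<bar>1 - 0\<bar>" using HML[rule_format, of t0 1 0] t by auto
    then have L0: "0 \<le> L" by auto
    have lim1: "(\<lambda>n. ?p (Suc n) t) \<longlonglongrightarrow> x t"
      using LIMSEQ_Suc[OF tendsto_uniform_limitI[OF U]] t by simp
    have cx: "continuous_on {t0..t} (\<lambda>s. g s (x s))" by (rule comp_cont[OF gc xcont[OF t]])
    have lim2: "(\<lambda>n. integral {t0..t} (\<lambda>s. g s (?p n s))) \<longlonglongrightarrow> integral {t0..t} (\<lambda>s. g s (x s))"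
      unfolding tendsto_iff
    proof (intro allI impI)
      fix e :: real assume e: "0 < e"
      define e' where "e' = e / (L * (t - t0) + 1)"
      have den: "0 < L * (t - t0) + 1" using L0 t by (simp add: add_nonneg_pos)
      have e': "0 < e'" unfolding e'_def using e den by simp
      show "\<forall>\<^sub>F n in sequentially. dist (integral {t0..t} (\<lambda>s. g s (?p n s))) (integral {t0..t} (\<lambda>s. g s (x s))) < e"
        using uniform_limitD[OF U e']
      proof eventually_elim
        case (elim n)
        have cn: "continuous_on {t0..t} (\<lambda>s. g s (?p n s))" by (rule comp_cont[OF gc pit_cont[OF gc]])
        have "integral {t0..t} (\<lambda>s. g s (?p n s)) - integral {t0..t} (\<lambda>s. g s (x s))
              = integral {t0..t} (\<lambda>s. g s (?p n s) - g s (x s))"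
          using integral_diff[OF integrable_continuous_real[OF cn] integrable_continuous_real[OF cx]] by simp
        also have "\<bar>\<dots>\<bar> \<le> integral {t0..t} (\<lambda>s. L * e')"
        proof (rule integral_norm_bound_integral[where 'a=real, unfolded real_norm_def])
          show "(\<lambda>s. g s (?p n s) - g s (x s)) integrable_on {t0..t}"
            by (intro integrable_continuous_real continuous_intros cn cx)
          show "(\<lambda>s. L * e') integrable_on {t0..t}" by (rule integrable_const_ivl)
          fix s assume s: "s \<in> {t0..t}"
          have "\<bar>g s (?p n s) - g s (x s)\<bar> \<le> L * \<bar>?p n s - x s\<bar>" using HML s by blast
          also have "\<dots> \<le> L * e'" using elim s L0 by (intro mult_left_mono) (auto simp: dist_real_def less_imp_le)
          finally show "\<bar>g s (?p n s) - g s (x s)\<bar> \<le> L * e'" .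
        qed
        also have "\<dots> = L * e' * (t - t0)" using t by simp
        also have "\<dots> < e"
        proof -
          have "L * e' * (t - t0) = e * (L * (t - t0)) / (L * (t - t0) + 1)"
            unfolding e'_def by (simp add: field_simps)
          also have "\<dots> < e" using e den L0 t by (simp add: field_simps)
          finally show ?thesis .
        qed
        finally show ?case by (simp add: dist_real_def)
      qed
    qed
    have "(\<lambda>n. ?p (Suc n) t) \<longlonglongrightarrow> y0 + integral {t0..t} (\<lambda>s. g s (x s))"
      using tendsto_add[OF tendsto_const lim2, of y0] by simp
    then show ?thesis using lim1 LIMSEQ_unique by blast
  qed
  have "x t0 = y0" using inteq[of t0] by simp
  moreover have "(x has_real_derivative g t (x t)) (at t within {t0..})" if t: "t0 \<le> t" for t
  proof -
    have cx: "continuous_on {t0..t+1} (\<lambda>s. g s (x s))" by (rule comp_cont[OF gc xcont]) (use t in simp)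
    have "((\<lambda>u. y0 + integral {t0..u} (\<lambda>s. g s (x s))) has_real_derivative (0 + g t (x t))) (at t within {t0..t+1})"
      by (intro derivative_intros integral_has_real_derivative[OF cx]) (use t in simp)
    then have "((\<lambda>u. y0 + integral {t0..u} (\<lambda>s. g s (x s))) has_real_derivative g t (x t)) (at t within {t0..t+1})"
      by simp
    then have "(x has_real_derivative g t (x t)) (at t within {t0..t+1})"
      by (rule has_field_derivative_transform_within[where d=1]) (use t inteq in auto)
    moreover have "at t within {t0..t+1} = at t within {t0..}"
      by (rule at_within_nhd[of t "{..<t+1}"]) auto
    ultimately show ?thesis by simp
  qed
  ultimately show ?thesis by blast
qed

lemma barrier_aux:
  fixes w :: "real \<Rightarrow> real"
  assumes ab: "a < b" and wa: "w a > 0" and wb: "w b \<le> 0" and wc: "continuous_on {a..b} w"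
    and der: "\<And>s. a < s \<Longrightarrow> s \<le> b \<Longrightarrow> w s = 0 \<Longrightarrow> \<exists>l>0. DERIV w s :> l"
  shows False
proof -
  define S where "S = {a..b} \<inter> w -` {..0}"
  have cS: "closed S" unfolding S_def by (rule continuous_closed_preimage[OF wc]) auto
  have bS: "b \<in> S" using ab wb unfolding S_def by auto
  have bdd: "bdd_below S" unfolding S_def by (auto intro: bdd_belowI[of _ a])
  define u where "u = Inf S"
  have uS: "u \<in> S" unfolding u_def using closed_contains_Inf[OF _ bdd cS] bS by auto
  then have ua: "a \<le> u" "u \<le> b" "w u \<le> 0" unfolding S_def by auto
  have lower: "u \<le> s" if "s \<in> S" for s unfolding u_def by (rule cInf_lower[OF that bdd])
  have pos: "w s > 0" if "a \<le> s" "s < u" for s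
  proof (rule ccontr)
    assume "\<not> w s > 0"
    then have "s \<in> S" using that ua unfolding S_def by auto
    then show False using lower that by fastforce
  qed
  have "u \<noteq> a" using ua wa by auto
  with ua have ua': "a < u" by auto
  obtain c where c: "a \<le> c" "c \<le> u" "w c = 0"
    using IVT2'[of w u 0 a] ua wa continuous_on_subset[OF wc, of "{a..u}"] by auto
  have "c \<in> S" using c ua unfolding S_def by auto
  then have "c = u" using lower c by fastforce
  with c have wu: "w u = 0" by simp
  obtain l where l: "l > 0" "DERIV w u :> l" using der[OF ua' ua(2) wu] by blast
  obtain d where d: "d > 0" "\<And>h. h > 0 \<Longrightarrow> h < d \<Longrightarrow> w (u - h) < w u"
    using DERIV_pos_inc_left[OF l(2) l(1)] by blast
  define h where "h = min d (u - a) / 2"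
  have h: "h > 0" "h < d" "h \<le> u - a" using d ua' unfolding h_def by auto
  have "w (u - h) < 0" using d(2)[OF h(1,2)] wu by simp
  moreover have "w (u - h) > 0" using pos[of "u - h"] h by auto
  ultimately show False by simp
qed

lemma barrier:
  fixes w w' :: "real \<Rightarrow> real"
  assumes w0: "w t0 \<ge> 0"
    and der: "\<And>t. t \<ge> t0 \<Longrightarrow> (w has_real_derivative w' t) (at t within {t0..})"
    and pos: "\<And>t. t \<ge> t0 \<Longrightarrow> w t = 0 \<Longrightarrow> w' t > 0"
    and t: "t > t0"
  shows "w t > 0"
proof (rule ccontr)
  assume "\<not> w t > 0"
  then have wt: "w t \<le> 0" by simp
  have wc: "continuous_on {t0..t} w"
  proof -
    have "\<forall>s\<in>{t0..t}. continuous (at s within {t0..t}) w"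
    proof
      fix s assume s: "s \<in> {t0..t}"
      have "(w has_real_derivative w' s) (at s within {t0..t})"
        using has_field_derivative_subset[OF der[of s]] s by auto
      then show "continuous (at s within {t0..t}) w" using DERIV_continuous by blast
    qed
    then show ?thesis using continuous_on_eq_continuous_within by blast
  qed
  have dat: "DERIV w s :> w' s" if "s > t0" for s
  proof -
    have "at s within {t0..} = at s within UNIV"
      by (rule at_within_nhd[of s "{t0<..}"]) (use that in auto)
    then show ?thesis using der[of s] that by simp
  qed
  have derpos: "\<exists>l>0. DERIV w s :> l" if "a < s" "t0 \<le> a" "w s = 0" for a s
    using dat[of s] pos[of s] that by auto
  show False
  proof (cases "w t0 > 0")
    case True
    show False by (rule barrier_aux[OF t True wt wc]) (use derpos in auto)
  next
    case False
    with w0 have z: "w t0 = 0" by simp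
    obtain d where d: "d > 0" "\<And>h. h > 0 \<Longrightarrow> t0 + h \<in> {t0..} \<Longrightarrow> h < d \<Longrightarrow> w t0 < w (t0 + h)"
      using has_real_derivative_pos_inc_right[OF der[of t0] pos[of t0]] z by auto
    define a where "a = t0 + min d (t - t0) / 2"
    have a: "t0 < a" "a < t" using d(1) t unfolding a_def by (auto simp: min_def field_simps)
    have wa: "w a > 0" using d(2)[of "min d (t - t0) / 2"] d(1) t z unfolding a_def by auto
    show False
      by (rule barrier_aux[OF a(2) wa wt continuous_on_subset[OF wc]]) (use a derpos in auto)
  qed
qed

lemma prod_deriv:
  assumes "(f has_real_derivative f') (at r)"
  shows "((\<lambda>r. f r * (r - p) * (r - q) / 2) has_real_derivative
           (f' * (r - p) * (r - q) / 2 + f r * ((r - q) + (r - p)) / 2)) (at r)"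
proof -
  have d1: "((\<lambda>r. r - p) has_real_derivative 1) (at r)" "((\<lambda>r. r - q) has_real_derivative 1) (at r)"
    by (auto intro!: derivative_eq_intros)
  have "((\<lambda>r. f r * (r - p) * (r - q) / 2) has_real_derivative
           ((f' * (r - p) + 1 * f r) * (r - q) + 1 * (f r * (r - p))) / 2) (at r)"
    by (rule DERIV_cdivide[OF DERIV_mult[OF DERIV_mult[OF assms d1(1)] d1(2)]])
  moreover have "((f' * (r - p) + 1 * f r) * (r - q) + 1 * (f r * (r - p))) / 2
      = f' * (r - p) * (r - q) / 2 + f r * ((r - q) + (r - p)) / 2"
    by (simp add: field_simps)
  ultimately show ?thesis by metis
qed
lemma clamp_lip:
  fixes a K y w :: real
  shows "\<bar>max a (min K y) - max a (min K w)\<bar> \<le> \<bar>y - w\<bar>"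
  by (cases "y \<le> w") (simp_all add: max_def min_def abs_if)


theorem proposition7:
  fixes A F :: "real \<Rightarrow> real \<Rightarrow> real"
    and rp rm :: "real \<Rightarrow> real"
    and rc hc :: real
    and hinf :: "real \<Rightarrow> real"
  defines "f \<equiv> metric_f F rp rm"
    and "h \<equiv> metric_h A F"
  assumes A_pos: "\<And>v r. r \<ge> 0 \<Longrightarrow> A v r > 0"
    and F_pos: "\<And>v r. r \<ge> 0 \<Longrightarrow> F v r > 0"
    and A_cont: "continuous_on (UNIV \<times> {0..}) (\<lambda>(v, r). A v r)"
    and F_cont: "continuous_on (UNIV \<times> {0..}) (\<lambda>(v, r). F v r)"
    and A_smooth: "\<And>v n r. r > 0 \<Longrightarrow> (deriv ^^ n) (A v) differentiable (at r)"
    and F_smooth: "\<And>v n r. r > 0 \<Longrightarrow> (deriv ^^ n) (F v) differentiable (at r)"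
    and f_infty: "\<And>v. ((f v) \<longlongrightarrow> 1) at_top"
    and A_infty: "\<And>v. ((A v) \<longlongrightarrow> 1) at_top"
    and f_zero: "\<And>v. f v 0 = 1"
    and f_reg: "\<And>v. (f v has_real_derivative 0) (at 0 within {0..})"
    and A_reg: "\<And>v. (A v has_real_derivative 0) (at 0 within {0..})"
    and horizons: "\<And>v. 0 < rm v \<and> rm v < rp v"
    and two_zeros: "\<And>v. {r. r \<ge> 0 \<and> f v r = 0} = {rm v, rp v}"
    and rp_diff: "\<And>v. rp differentiable (at v)"
    and rm_diff: "\<And>v. rm differentiable (at v)"
    and rp_decr: "\<And>v. deriv rp v < 0"
    and case3: "\<And>v. deriv rm v < 0"
    and rp_lim: "(rp \<longlongrightarrow> rc) at_top"
    and rm_lim: "(rm \<longlongrightarrow> rc) at_top"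
    and hinf_analytic: "\<exists>\<delta>>0. (\<exists>a :: nat \<Rightarrow> real. \<forall>r. \<bar>r - rc\<bar> < \<delta> \<longrightarrow>
                           (\<lambda>n. a n * (r - rc) ^ n) sums hinf r)
         \<and> (\<forall>n. uniform_limit {rc - \<delta> .. rc + \<delta>} (\<lambda>v r. (deriv ^^ n) (h v) r)
                                 ((deriv ^^ n) hinf) at_top)"
    and hc_def: "((\<lambda>v. h v rc) \<longlongrightarrow> hc) at_top"
    and cond: "\<exists>\<alpha> \<epsilon> v0. 0 < \<alpha> \<and> \<alpha> < 1 \<and> \<epsilon> > 0 \<and>
         (\<forall>v>v0. \<alpha> * deriv rp v + (1 - \<alpha>) * deriv rm v
                  > - (hc / 2) * \<alpha> * (1 - \<alpha>) * (1 - \<epsilon>) * (rp v - rm v)^2)"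
  shows "class2 h rp rm"
proof -
  have hdef: "\<And>v r. h v r = A v r * F v r" unfolding h_def metric_h_def by simp
  have rpD: "\<And>v. (rp has_real_derivative deriv rp v) (at v)"
    using rp_diff DERIV_deriv_iff_real_differentiable by blast
  have rmD: "\<And>v. (rm has_real_derivative deriv rm v) (at v)"
    using rm_diff DERIV_deriv_iff_real_differentiable by blast
  have rp_cont: "continuous_on UNIV rp"
    using rpD by (meson DERIV_isCont continuous_at_imp_continuous_on)
  have rm_cont: "continuous_on UNIV rm"
    using rmD by (meson DERIV_isCont continuous_at_imp_continuous_on)
  have rm_mono: "rm T \<le> rm s" if "s \<le> T" for s T
  proof (cases "s = T")
    case False
    then have "s < T" using that by simp
    then show ?thesis using DERIV_neg_imp_decreasing[of s T rm] rmD case3 by fastforce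
  qed simp
  have rp_mono: "rp T \<le> rp s" if "s \<le> T" for s T
  proof (cases "s = T")
    case False
    then have "s < T" using that by simp
    then show ?thesis using DERIV_neg_imp_decreasing[of s T rp] rpD rp_decr by fastforce
  qed simp
  obtain \<alpha> \<epsilon> v0 where al: "0 < \<alpha>" "\<alpha> < 1" and ep: "\<epsilon> > 0"
    and cnd: "\<And>v. v > v0 \<Longrightarrow> \<alpha> * deriv rp v + (1 - \<alpha>) * deriv rm v
                  > - (hc / 2) * \<alpha> * (1 - \<alpha>) * (1 - \<epsilon>) * (rp v - rm v)^2"
    using cond by blast
  obtain \<delta> a where dpos: "\<delta> > 0"
    and ser: "\<And>r. \<bar>r - rc\<bar> < \<delta> \<Longrightarrow> (\<lambda>n. a n * (r - rc) ^ n) sums hinf r"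
    and U: "\<And>n. uniform_limit {rc - \<delta> .. rc + \<delta>} (\<lambda>v r. (deriv ^^ n) (h v) r) ((deriv ^^ n) hinf) at_top"
    using hinf_analytic by blast
  define I where "I = {rc - \<delta> .. rc + \<delta>}"
  have U0: "uniform_limit I (\<lambda>v r. h v r) hinf at_top" using U[of 0] unfolding I_def by simp
  have U1: "uniform_limit I (\<lambda>v r. deriv (h v) r) (deriv hinf) at_top" using U[of 1] unfolding I_def by simp
  have rc0: "rc \<ge> 0"
    by (rule tendsto_lowerbound[OF rm_lim]) (use horizons less_imp_le in \<open>auto intro!: always_eventually\<close>)
  have hpos: "h v r > 0" if "r \<ge> 0" for v r using A_pos F_pos that hdef by simp
  have rcI: "rc \<in> I" unfolding I_def using dpos by simp
  have hinf_rc: "hinf rc = hc"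
    using tendsto_unique[OF _ tendsto_uniform_limitI[OF U0 rcI] hc_def] by simp
  have hc0: "hc \<ge> 0"
    by (rule tendsto_lowerbound[OF hc_def]) (use hpos rc0 less_imp_le in \<open>auto intro!: always_eventually\<close>)
  define z where "z v = \<alpha> * rp v + (1 - \<alpha>) * rm v" for v
  have z_lim: "(z \<longlongrightarrow> rc) at_top"
  proof -
    have "((\<lambda>v. \<alpha> * rp v + (1 - \<alpha>) * rm v) \<longlongrightarrow> \<alpha> * rc + (1 - \<alpha>) * rc) at_top"
      by (intro tendsto_intros rp_lim rm_lim)
    then show ?thesis unfolding z_def by (simp add: algebra_simps)
  qed
  define P where "P y = (\<Sum>n. a n * y ^ n)" for y
  have Peq: "hinf r = P (r - rc)" if "\<bar>r - rc\<bar> < \<delta>" for r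
    unfolding P_def using sums_unique[OF ser[OF that]] by simp
  have Pcont: "isCont P 0"
  proof -
    have "summable (\<lambda>n. a n * (\<delta>/2) ^ n)" using ser[of "rc + \<delta>/2"] dpos sums_summable by auto
    then show ?thesis unfolding P_def by (rule isCont_powser) (use dpos in simp)
  qed
  have P0: "P 0 = hc" using Peq[of rc] dpos hinf_rc by simp
  have ev_zI: "eventually (\<lambda>v. \<bar>z v - rc\<bar> < \<delta>) at_top"
    using tendstoD[OF z_lim dpos] by (simp add: dist_real_def)
  have hinfz: "((\<lambda>v. hinf (z v)) \<longlongrightarrow> hc) at_top"
  proof -
    have "((\<lambda>v. P (z v - rc)) \<longlongrightarrow> P 0) at_top"
      by (rule isCont_tendsto_compose[OF Pcont]) (use tendsto_diff[OF z_lim tendsto_const, of rc] in simp)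
    then have "((\<lambda>v. P (z v - rc)) \<longlongrightarrow> hc) at_top" using P0 by simp
    moreover have "eventually (\<lambda>v. P (z v - rc) = hinf (z v)) at_top"
      using ev_zI by eventually_elim (simp add: Peq)
    ultimately show ?thesis by (rule Lim_transform_eventually)
  qed
  have hz_lim: "((\<lambda>v. h v (z v)) \<longlongrightarrow> hc) at_top"
    unfolding tendsto_iff
  proof (intro allI impI)
    fix e :: real assume e: "0 < e"
    have e2: "0 < e/2" using e by simp
    show "eventually (\<lambda>v. dist (h v (z v)) hc < e) at_top"
      using uniform_limitD[OF U0 e2] ev_zI tendstoD[OF hinfz e2]
    proof eventually_elim
      case (elim v)
      have "z v \<in> I" using elim(2) unfolding I_def by auto
      then have "\<bar>h v (z v) - hinf (z v)\<bar> < e/2" using elim(1) by (auto simp: dist_real_def)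
      moreover have "\<bar>hinf (z v) - hc\<bar> < e/2" using elim(3) by (simp add: dist_real_def)
      ultimately show ?case unfolding dist_real_def by arith
    qed
  qed
  have zpos: "z v > 0" for v
  proof -
    have "z v = rm v + \<alpha> * (rp v - rm v)" unfolding z_def by (simp add: algebra_simps)
    then show ?thesis using horizons[of v] al by (smt (verit) mult_pos_pos)
  qed
  have ev_h: "eventually (\<lambda>v. hc * (1 - \<epsilon>) < h v (z v)) at_top"
  proof (cases "hc = 0")
    case True
    have "\<forall>v. hc * (1 - \<epsilon>) < h v (z v)" using True hpos[OF less_imp_le[OF zpos]] by simp
    then show ?thesis by (rule always_eventually)
  next
    case False
    then have "hc * (1 - \<epsilon>) < hc" using hc0 ep by (simp add: algebra_simps)
    then show ?thesis using order_tendstoD(1)[OF hz_lim] by blast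
  qed
  define K where "K = rc + \<delta>"
  have rcK: "rc < K" unfolding K_def using dpos by simp
  have e1: "eventually (\<lambda>v. v > v0) at_top" by (rule eventually_gt_at_top)
  have e2: "eventually (\<lambda>v. rp v < K) at_top" by (rule order_tendstoD(2)[OF rp_lim rcK])
  have e3: "eventually (\<lambda>v. rm v > rc - \<delta>) at_top" by (rule order_tendstoD(1)[OF rm_lim]) (use dpos in simp)
  have e4: "eventually (\<lambda>v. \<forall>r\<in>I. dist (deriv (h v) r) (deriv hinf r) < 1) at_top"
    by (rule uniform_limitD[OF U1]) simp
  have "eventually (\<lambda>v. v > v0 \<and> rp v < K \<and> rm v > rc - \<delta> \<and> (\<forall>r\<in>I. dist (deriv (h v) r) (deriv hinf r) < 1)
          \<and> hc * (1 - \<epsilon>) < h v (z v)) at_top"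
    using e1 e2 e3 e4 ev_h by eventually_elim blast
  then obtain N where HN: "\<And>v. v \<ge> N \<Longrightarrow> v > v0 \<and> rp v < K \<and> rm v > rc - \<delta>
          \<and> (\<forall>r\<in>I. dist (deriv (h v) r) (deriv hinf r) < 1) \<and> hc * (1 - \<epsilon>) < h v (z v)"
    unfolding eventually_at_top_linorder by blast
  define cl where "cl v y = max (rm v) (min K y)" for v y
  define G where "G v r = h v r * (r - rp v) * (r - rm v) / 2" for v r
  define g where "g s y = G s (cl s y)" for s y
  have hc2: "continuous_on (UNIV \<times> {0..}) (\<lambda>p. h (fst p) (snd p))"
  proof -
    have "continuous_on (UNIV \<times> {0..}) (\<lambda>p. A (fst p) (snd p) * F (fst p) (snd p))"
      using continuous_on_mult[OF A_cont F_cont] unfolding case_prod_unfold .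
    then show ?thesis using hdef by simp
  qed
  have rmc: "continuous_on S (\<lambda>p. rm (fst p))" for S :: "(real \<times> real) set"
    by (rule continuous_on_compose2[OF rm_cont]) (auto intro: continuous_intros)
  have rpc: "continuous_on S (\<lambda>p. rp (fst p))" for S :: "(real \<times> real) set"
    by (rule continuous_on_compose2[OF rp_cont]) (auto intro: continuous_intros)
  have clc: "continuous_on S (\<lambda>p. cl (fst p) (snd p))" for S :: "(real \<times> real) set"
    unfolding cl_def by (intro continuous_intros rmc)
  have clge: "cl v y \<ge> rm v" for v y unfolding cl_def by simp
  have gc: "continuous_on ({N..} \<times> UNIV) (\<lambda>p. g (fst p) (snd p))"
  proof -
    have "continuous_on ({N..} \<times> UNIV) (\<lambda>p. h (fst (fst p, cl (fst p) (snd p))) (snd (fst p, cl (fst p) (snd p))))"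
    proof (rule continuous_on_compose2[OF hc2])
      show "continuous_on ({N..} \<times> UNIV) (\<lambda>p. (fst p, cl (fst p) (snd p)))"
        by (intro continuous_intros clc)
      show "(\<lambda>p. (fst p, cl (fst p) (snd p))) ` ({N..} \<times> UNIV) \<subseteq> UNIV \<times> {0..}"
        using clge horizons by (auto intro: order.trans[OF less_imp_le])
    qed
    then have "continuous_on ({N..} \<times> UNIV) (\<lambda>p. h (fst p) (cl (fst p) (snd p)))" by simp
    then show ?thesis unfolding g_def G_def by (intro continuous_intros clc rmc rpc) auto
  qed
  have hN: "rm v < rp v \<and> rp v < K \<and> 0 < rm v \<and> rc - \<delta> < rm v" if "v \<ge> N" for v
    using HN[OF that] horizons[of v] by auto
  have hder: "(h s has_real_derivative (deriv (A s) r * F s r + A s r * deriv (F s) r)) (at r)" if r: "r > 0" for s r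
  proof -
    have "A s differentiable (at r)" using A_smooth[of r 0 s, OF r] by simp
    then have dA: "(A s has_real_derivative deriv (A s) r) (at r)" using DERIV_deriv_iff_real_differentiable by blast
    have "F s differentiable (at r)" using F_smooth[of r 0 s, OF r] by simp
    then have dF: "(F s has_real_derivative deriv (F s) r) (at r)" using DERIV_deriv_iff_real_differentiable by blast
    have "h s = (\<lambda>r. A s r * F s r)" using hdef by auto
    then show ?thesis using DERIV_mult[OF dA dF] by (simp add: mult.commute)
  qed
  have hderiv: "deriv (h s) r = deriv (A s) r * F s r + A s r * deriv (F s) r" if r: "r > 0" for s r
    using DERIV_imp_deriv[OF hder[OF r]] .
  have hD: "(h s has_real_derivative deriv (h s) r) (at r)" if r: "r > 0" for s r
    using hder[OF r] hderiv[OF r] by simp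
  have hderc: "continuous_on {a'..b'} (deriv (h s))" if "a' > 0" for a' b' s
  proof -
    have "isCont (deriv (h s)) r" if r: "r \<in> {a'..b'}" for r
    proof -
      have r0: "r > 0" using r \<open>a' > 0\<close> by auto
      have "isCont (\<lambda>r. deriv (A s) r * F s r + A s r * deriv (F s) r) r"
      proof (intro continuous_intros)
        show "isCont (deriv (A s)) r" using A_smooth[of r 1 s, OF r0]
          by (simp add: differentiable_imp_continuous_within)
        show "isCont (deriv (F s)) r" using F_smooth[of r 1 s, OF r0]
          by (simp add: differentiable_imp_continuous_within)
        show "isCont (A s) r" using A_smooth[of r 0 s, OF r0]
          by (simp add: differentiable_imp_continuous_within)
        show "isCont (F s) r" using F_smooth[of r 0 s, OF r0]
          by (simp add: differentiable_imp_continuous_within)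
      qed
      moreover have "eventually (\<lambda>u. deriv (A s) u * F s u + A s u * deriv (F s) u = deriv (h s) u) (nhds r)"
        using eventually_nhds_in_open[of "{0<..}" r] r0
        by (auto elim!: eventually_mono simp: hderiv)
      ultimately show ?thesis using isCont_cong[where f="\<lambda>r. deriv (A s) r * F s r + A s r * deriv (F s) r" and g="deriv (h s)"] by simp
    qed
    then show ?thesis by (simp add: continuous_at_imp_continuous_on)
  qed
  have gbT: "\<exists>M L. \<forall>s\<in>{N..T}. \<forall>y w. \<bar>g s y\<bar> \<le> M \<and> \<bar>g s y - g s w\<bar> \<le> L * \<bar>y - w\<bar>" if T: "T \<ge> N" for T
  proof -
    have rmT: "0 < rm T" "rm T < K" "rc - \<delta> < rm T" using hN[OF T] by auto
    define R where "R = {N..T} \<times> {rm T..K}"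
    have hR: "continuous_on R (\<lambda>p. h (fst p) (snd p))"
      by (rule continuous_on_subset[OF hc2]) (use rmT in \<open>auto simp: R_def\<close>)
    obtain Hm where Hm: "Hm \<ge> 0" "\<And>p. p \<in> R \<Longrightarrow> norm (h (fst p) (snd p)) \<le> Hm"
      using continuous_on_compact_bound[OF _ hR] unfolding R_def by (metis compact_Icc compact_Times)
    have Hm': "\<bar>h s r\<bar> \<le> Hm" if "s \<in> {N..T}" "r \<in> {rm T..K}" for s r
      using Hm(2)[of "(s, r)"] that unfolding R_def by auto
    obtain C where C: "C \<ge> 0" "\<And>r. r \<in> {rm T..K} \<Longrightarrow> norm (deriv (h N) r) \<le> C"
      using continuous_on_compact_bound[OF compact_Icc hderc[OF rmT(1)]] by blast
    have dbound: "\<bar>deriv (h s) r\<bar> \<le> C + 2" if s: "s \<in> {N..T}" and r: "r \<in> {rm T..K}" for s r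
    proof -
      have rI: "r \<in> I" using r rmT unfolding I_def K_def by auto
      have "dist (deriv (h s) r) (deriv hinf r) < 1" using HN[of s] s rI by auto
      moreover have "dist (deriv (h N) r) (deriv hinf r) < 1" using HN[of N] rI by auto
      moreover have "\<bar>deriv (h N) r\<bar> \<le> C" using C(2)[OF r] by simp
      ultimately show ?thesis unfolding dist_real_def by arith
    qed
    define B where "B = K + rp N"
    have Bb: "\<bar>r - rp s\<bar> \<le> B \<and> \<bar>r - rm s\<bar> \<le> B" if s: "s \<in> {N..T}" and r: "r \<in> {rm T..K}" for s r
    proof -
      have "rp s \<le> rp N" using rp_mono s by auto
      moreover have "0 < rm s" "rm s < rp s" using horizons[of s] by auto
      moreover have "0 < r" "r \<le> K" using r rmT by auto
      ultimately show ?thesis unfolding B_def by arith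
    qed
    have B0: "B \<ge> 0" using Bb[of N K] rmT T by auto
    define M where "M = Hm * B * B / 2"
    define D where "D s r = deriv (h s) r * (r - rp s) * (r - rm s) / 2 + h s r * ((r - rm s) + (r - rp s)) / 2" for s r
    define L where "L = (C + 2) * B * B / 2 + Hm * (2 * B) / 2"
    have GD: "(G s has_real_derivative D s r) (at r)" if "r > 0" for s r
      unfolding G_def D_def using prod_deriv[OF hD[OF that]] by simp
    have Gb: "\<bar>G s r\<bar> \<le> M" if s: "s \<in> {N..T}" and r: "r \<in> {rm T..K}" for s r
    proof -
      have "\<bar>G s r\<bar> = \<bar>h s r\<bar> * \<bar>r - rp s\<bar> * \<bar>r - rm s\<bar> / 2" unfolding G_def by (simp add: abs_mult)
      also have "\<dots> \<le> Hm * B * B / 2"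
        using Hm'[OF s r] Bb[OF s r] by (intro divide_right_mono mult_mono) auto
      finally show ?thesis unfolding M_def .
    qed
    have Db: "\<bar>D s r\<bar> \<le> L" if s: "s \<in> {N..T}" and r: "r \<in> {rm T..K}" for s r
    proof -
      have "\<bar>D s r\<bar> \<le> \<bar>deriv (h s) r * (r - rp s) * (r - rm s) / 2\<bar> + \<bar>h s r * ((r - rm s) + (r - rp s)) / 2\<bar>"
        unfolding D_def by (rule abs_triangle_ineq)
      also have "\<dots> = \<bar>deriv (h s) r\<bar> * \<bar>r - rp s\<bar> * \<bar>r - rm s\<bar> / 2 + \<bar>h s r\<bar> * \<bar>(r - rm s) + (r - rp s)\<bar> / 2"
        by (simp add: abs_mult)
      also have "\<dots> \<le> (C + 2) * B * B / 2 + Hm * (B + B) / 2"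
        using dbound[OF s r] Hm'[OF s r] Bb[OF s r] B0 order.trans[OF abs_triangle_ineq add_mono, of "r - rm s" "r - rp s" B B]
        by (intro add_mono divide_right_mono mult_mono) auto
      finally show ?thesis unfolding L_def by simp
    qed
    have Glip: "\<bar>G s r1 - G s r2\<bar> \<le> L * \<bar>r1 - r2\<bar>" if s: "s \<in> {N..T}" and r: "r1 \<in> {rm T..K}" "r2 \<in> {rm T..K}" for s r1 r2
    proof -
      have "norm (G s r1 - G s r2) \<le> L * norm (r1 - r2)"
      proof (rule field_differentiable_bound[of "{rm T..K}"])
        show "convex {rm T..K}" by simp
        fix u assume u: "u \<in> {rm T..K}"
        then have "u > 0" using rmT by auto
        then show "(G s has_field_derivative D s u) (at u within {rm T..K})"
          using GD has_field_derivative_at_within by blast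
        show "norm (D s u) \<le> L" using Db[OF s u] by simp
      qed (use r in auto)
      then show ?thesis by simp
    qed
    have clin: "cl s y \<in> {rm T..K}" if s: "s \<in> {N..T}" for s y
    proof -
      have "rm T \<le> rm s" using rm_mono s by auto
      moreover have "rm s \<le> K" using hN[of s] s by auto
      ultimately show ?thesis unfolding cl_def by auto
    qed
    have cllip: "\<bar>cl s y - cl s w\<bar> \<le> \<bar>y - w\<bar>" for s y w
      unfolding cl_def by (rule clamp_lip)
    have L0: "L \<ge> 0" unfolding L_def using C B0 Hm by simp
    show ?thesis
    proof (intro exI ballI allI conjI)
      fix s y w assume s: "s \<in> {N..T}"
      show "\<bar>g s y\<bar> \<le> M" unfolding g_def using Gb[OF s clin[OF s]] .
      have "\<bar>g s y - g s w\<bar> \<le> L * \<bar>cl s y - cl s w\<bar>" unfolding g_def using Glip[OF s clin[OF s] clin[OF s]] .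
      also have "\<dots> \<le> L * \<bar>y - w\<bar>" using cllip L0 by (intro mult_left_mono) auto
      finally show "\<bar>g s y - g s w\<bar> \<le> L * \<bar>y - w\<bar>" .
    qed
  qed
  have gb: "\<exists>M L. \<forall>s\<in>{N..T}. \<forall>y w. \<bar>g s y\<bar> \<le> M \<and> \<bar>g s y - g s w\<bar> \<le> L * \<bar>y - w\<bar>" for T
  proof -
    obtain M L where "\<forall>s\<in>{N..max T N}. \<forall>y w. \<bar>g s y\<bar> \<le> M \<and> \<bar>g s y - g s w\<bar> \<le> L * \<bar>y - w\<bar>"
      using gbT[of "max T N"] by auto
    then show ?thesis by (intro exI[of _ M] exI[of _ L]) auto
  qed
  obtain x where x0: "x N = rm N" and xD: "\<And>t. t \<ge> N \<Longrightarrow> (x has_real_derivative g t (x t)) (at t within {N..})"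
    using picard_exists[OF gc gb, of "rm N"] by blast
  have rmD': "(rm has_real_derivative deriv rm t) (at t within {N..})" for t
    using rmD has_field_derivative_at_within by blast
  have rpD': "(rp has_real_derivative deriv rp t) (at t within {N..})" for t
    using rpD has_field_derivative_at_within by blast
  have cl_id: "cl v y = y" if "rm v \<le> y" "y \<le> K" for v y
    unfolding cl_def using that by simp
  have zeq: "z v - rp v = - ((1 - \<alpha>) * (rp v - rm v))" "z v - rm v = \<alpha> * (rp v - rm v)" for v
    unfolding z_def by (simp_all add: algebra_simps)
  have z_le: "rm v \<le> z v" "z v < rp v" for v
  proof -
    have "0 < rp v - rm v" using horizons[of v] by simp
    then have a1: "0 < (1 - \<alpha>) * (rp v - rm v)" and a2: "0 \<le> \<alpha> * (rp v - rm v)" using al by simp_all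
    have e1: "z v - rp v = - ((1 - \<alpha>) * (rp v - rm v))" and e2: "z v - rm v = \<alpha> * (rp v - rm v)" using zeq by auto
    show "rm v \<le> z v" using a2 e2 by linarith
    show "z v < rp v" using a1 e1 by linarith
  qed
  have w0: "0 \<le> x N - rm N" using x0 by simp
  have der1: "((\<lambda>v. x v - rm v) has_real_derivative (g t (x t) - deriv rm t)) (at t within {N..})"
    if "N \<le> t" for t
    by (intro DERIV_diff xD[OF that] rmD')
  have pos1: "0 < g t (x t) - deriv rm t" if "N \<le> t" "x t - rm t = 0" for t
  proof -
    have "x t = rm t" using that by simp
    moreover have "rm t \<le> K" using hN[OF that(1)] by simp
    ultimately have "g t (x t) = 0" unfolding g_def G_def using cl_id[of t "rm t"] by simp
    then show ?thesis using case3[of t] by simp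
  qed
  have b1: "0 < x t - rm t" if t: "N < t" for t
    using barrier[of "\<lambda>v. x v - rm v" N "\<lambda>v. g v (x v) - deriv rm v" t, OF w0 der1 pos1 t]
    by simp
  have w0': "0 \<le> z N - x N" using x0 z_le[of N] by simp
  have zD: "(z has_real_derivative (\<alpha> * deriv rp t + (1 - \<alpha>) * deriv rm t)) (at t within {N..})" for t
  proof -
    have "((\<lambda>v. \<alpha> * rp v + (1 - \<alpha>) * rm v) has_real_derivative (\<alpha> * deriv rp t + (1 - \<alpha>) * deriv rm t)) (at t within {N..})"
      by (intro DERIV_add DERIV_cmult rpD' rmD')
    then show ?thesis unfolding z_def[abs_def] .
  qed
  have der2: "((\<lambda>v. z v - x v) has_real_derivative (\<alpha> * deriv rp t + (1 - \<alpha>) * deriv rm t - g t (x t))) (at t within {N..})"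
    if "N \<le> t" for t
    by (intro DERIV_diff xD[OF that] zD)
  have pos2: "0 < \<alpha> * deriv rp t + (1 - \<alpha>) * deriv rm t - g t (x t)" if t: "N \<le> t" "z t - x t = 0" for t
  proof -
    have xz: "x t = z t" using t by simp
    have Ht: "t > v0" "hc * (1 - \<epsilon>) < h t (z t)" using HN[OF t(1)] by auto
    define \<Delta> where "\<Delta> = rp t - rm t"
    have D0: "\<Delta> > 0" unfolding \<Delta>_def using horizons[of t] by simp
    define Q where "Q = \<alpha> * (1 - \<alpha>) * \<Delta>^2"
    have Q0: "Q > 0" unfolding Q_def using al D0 by simp
    have "z t \<le> K" using z_le[of t] hN[OF t(1)] by simp
    then have "g t (x t) = G t (z t)" unfolding g_def using xz cl_id[of t "z t"] z_le[of t] by simp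
    also have "\<dots> = h t (z t) * (- ((1 - \<alpha>) * \<Delta>)) * (\<alpha> * \<Delta>) / 2"
      unfolding G_def \<Delta>_def using zeq[of t] by simp
    also have "\<dots> = - (h t (z t) * Q) / 2"
      unfolding Q_def by (simp add: power2_eq_square algebra_simps)
    finally have g_eq: "g t (x t) = - (h t (z t) * Q) / 2" .
    have c1: "\<alpha> * deriv rp t + (1 - \<alpha>) * deriv rm t > - ((hc * (1 - \<epsilon>)) * Q) / 2"
    proof -
      have "- (hc / 2) * \<alpha> * (1 - \<alpha>) * (1 - \<epsilon>) * (rp t - rm t)^2 = - ((hc * (1 - \<epsilon>)) * Q) / 2"
        unfolding Q_def \<Delta>_def by (simp add: field_simps)
      then show ?thesis using cnd[OF Ht(1)] by linarith
    qed
    have c2: "(hc * (1 - \<epsilon>)) * Q < h t (z t) * Q" using mult_strict_right_mono[OF Ht(2) Q0] .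
    show ?thesis using g_eq c1 c2 by linarith
  qed
  have b2: "0 < z t - x t" if t: "N < t" for t
    using barrier[of "\<lambda>v. z v - x v" N "\<lambda>v. \<alpha> * deriv rp v + (1 - \<alpha>) * deriv rm v - g v (x v)" t,
        OF w0' der2 pos2 t]
    by simp
  have xb: "rm t \<le> x t \<and> x t \<le> z t" if t: "N \<le> t" for t
  proof (cases "t = N")
    case True then show ?thesis using x0 z_le[of N] by simp
  next
    case False then have "N < t" using t by simp
    then show ?thesis using b1 b2 by fastforce
  qed
  have geq: "g t (x t) = h t (x t) * (x t - rp t) * (x t - rm t) / 2" if t: "N \<le> t" for t
  proof -
    have "x t \<le> K" using xb[OF t] z_le[of t] hN[OF t] by linarith
    then show ?thesis unfolding g_def G_def using cl_id[of t "x t"] xb[OF t] by simp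
  qed
  show ?thesis
    unfolding class2_def outgoing_null_geodesic_def emitted_from_inner_AH_def reaches_outer_AH_def
  proof (intro exI[of _ N] exI[of _ x] conjI allI impI)
    fix v assume v: "N \<le> v"
    show "0 < x v" using xb[OF v] horizons[of v] by linarith
    show "(x has_real_derivative h v (x v) * (x v - rp v) * (x v - rm v) / 2) (at v within {N..})"
      using xD[OF v] geq[OF v] by simp
  next
    show "x N = rm N" by (rule x0)
  next
    show "\<not> (\<exists>v\<ge>N. x v = rp v)" using xb z_le by (metis not_less)
  qed
qed


end
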